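(* For all $\boldsymbol{\omega}\in\mathbb{R}^N$, $$\left|\prod_{m=1}^M\frac{1}{1-z_m(\boldsymbol{\omega})}-\prod_{m=1}^M e^{z_m(\boldsymbol{\omega})}\right|\le\sum_{m=1}^M\min\Big\{2,\ \big|1-z_m(\boldsymbol{\omega})-e^{-z_m(\boldsymbol{\omega})}\big|\Big\}.$$
   Context: Let $\sigma_v^2>0$, $\beta(M)>0$, $\mathbf{h}\in\mathbb{C}^N$, and $\lambda_1,\dots,\lambda_M\ge0$ the eigenvalues of a Hermitian positive semidefinite $\boldsymbol{\Sigma}_{\mathbf{s}}\in\mathbb{C}^{M\times M}$. For $\boldsymbol{\omega}\in\mathbb{R}^N$ and $m\in[1:M]$ define $z_m(\boldsymbol{\omega})=j\frac{\lambda_m}{\beta(M)}\sum_{n=1}^N\frac{|h_n|^2\omega_n}{1-j\frac{\sigma_v^2\omega_n}{\beta(M)}}$, $j=\sqrt{-1}$. *)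

theory Defs
  imports "HOL-Analysis.Analysis"
begin

definition zfun :: "real \<Rightarrow> real \<Rightarrow> nat \<Rightarrow> (nat \<Rightarrow> complex) \<Rightarrow> real \<Rightarrow> (nat \<Rightarrow> real) \<Rightarrow> complex" where
  "zfun sigma2 beta N h lam \<omega> =
     \<i> * complex_of_real (lam / beta) *
     (\<Sum>n=1..N. complex_of_real ((cmod (h n))\<^sup>2 * \<omega> n) /
                 (1 - \<i> * complex_of_real (sigma2 * \<omega> n / beta)))"

end

theory Submission imports Defs begin
lemma im_term: "Im (complex_of_real a / (1 - \<i> * complex_of_real b)) = a*b/(1+b\<^sup>2)"
  by (simp add: Im_divide power2_eq_square)
lemma re_z:
  assumes "sigma2 \<ge> 0" "beta > 0" "lam \<ge> 0"
  shows "Re (zfun sigma2 beta N h lam \<omega>) \<le> 0"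
proof -
  have "Im (\<Sum>n=1..N. complex_of_real ((cmod (h n))\<^sup>2 * \<omega> n) /
                 (1 - \<i> * complex_of_real (sigma2 * \<omega> n / beta))) \<ge> 0"
    unfolding Im_sum im_term
  proof (rule sum_nonneg)
    fix n
    have "(cmod (h n))\<^sup>2 * \<omega> n * (sigma2 * \<omega> n / beta) = (cmod (h n))\<^sup>2 * (\<omega> n)\<^sup>2 * sigma2 / beta"
      by (simp add: power2_eq_square)
    also have "\<dots> \<ge> 0" using assms by simp
    finally show "0 \<le> (cmod (h n))\<^sup>2 * \<omega> n * (sigma2 * \<omega> n / beta) / (1 + (sigma2 * \<omega> n / beta)\<^sup>2)"
      by (intro divide_nonneg_pos) (auto simp: add_pos_nonneg)
  qed
  moreover have "lam / beta \<ge> 0" using assms by simp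
  moreover have "\<And>c S. Re (\<i> * complex_of_real c * S) = - (c * Im S)" by simp
  ultimately show ?thesis unfolding zfun_def
    by (simp only:) (intro neg_le_0_iff_le[THEN iffD2] mult_nonneg_nonneg)
qed

lemma prod_diff:
  fixes a b :: "nat \<Rightarrow> complex"
  assumes "finite A" "\<And>x. x\<in>A \<Longrightarrow> norm (a x) \<le> 1" "\<And>x. x\<in>A \<Longrightarrow> norm (b x) \<le> 1"
  shows "norm (prod a A - prod b A) \<le> (\<Sum>x\<in>A. norm (a x - b x))"
  using assms
proof (induction A rule: finite_induct)
  case empty thus ?case by simp
next
  case (insert x F)
  have IH: "norm (prod a F - prod b F) \<le> (\<Sum>x\<in>F. norm (a x - b x))" using insert by auto
  have nb: "norm (prod b F) \<le> 1" using insert.prems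
    by (simp add: prod_norm[symmetric] prod_le_1)
  have ax: "norm (a x) \<le> 1" using insert.prems by auto
  have "prod a (insert x F) - prod b (insert x F) = a x * (prod a F - prod b F) + (a x - b x) * prod b F"
    using insert by (simp add: algebra_simps)
  also have "norm \<dots> \<le> norm (a x) * norm (prod a F - prod b F) + norm (a x - b x) * norm (prod b F)"
    by (metis norm_mult norm_triangle_ineq)
  also have "\<dots> \<le> 1 * norm (prod a F - prod b F) + norm (a x - b x) * 1"
    by (intro add_mono mult_mono ax nb) auto
  finally show ?case using IH insert by simp
qed

lemma single:
  fixes z :: complex
  assumes "Re z \<le> 0"
  shows "norm (1/(1-z) - exp z) \<le> min 2 (norm (1-z-exp(-z)))"
proof -
  have n1: "norm (1 - z) \<ge> 1"
    using complex_Re_le_cmod[of "1-z"] assms by simp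
  hence nz: "1 - z \<noteq> 0" by auto
  have a1: "norm (1/(1-z)) \<le> 1" using n1 by (simp add: norm_divide divide_le_eq_1)
  have e1: "norm (exp z) \<le> 1" using assms by simp
  have "norm (1/(1-z) - exp z) \<le> norm (1/(1-z)) + norm (exp z)" by (rule norm_triangle_ineq4)
  also have "\<dots> \<le> 2" using a1 e1 by linarith
  finally have t1: "norm (1/(1-z) - exp z) \<le> 2" .
  have "1/(1-z) - exp z = (1/(1-z)) * exp z * (exp (-z) - (1 - z))"
    using nz by (simp add: field_simps exp_minus)
  hence "norm (1/(1-z) - exp z) = norm (1/(1-z)) * norm (exp z) * norm (exp (-z) - (1 - z))"
    by (simp only: norm_mult)
  hence "norm (1/(1-z) - exp z) = norm (1/(1-z)) * norm (exp z) * norm (1-z-exp(-z))"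
    using norm_minus_commute[of "exp (-z)" "1 - z"] by simp
  also have "\<dots> \<le> 1 * 1 * norm (1-z-exp(-z))"
    by (intro mult_right_mono mult_mono a1 e1) auto
  finally show ?thesis using t1 by simp
qed
theorem lemma3:
  fixes sigma2 beta :: real and N M :: nat
    and h :: "nat \<Rightarrow> complex" and lam :: "nat \<Rightarrow> real" and \<omega> :: "nat \<Rightarrow> real"
  assumes "sigma2 > 0" and "beta > 0"
    and "\<And>m. m \<in> {1..M} \<Longrightarrow> lam m \<ge> 0"
  shows "cmod ((\<Prod>m=1..M. 1 / (1 - zfun sigma2 beta N h (lam m) \<omega>))
               - (\<Prod>m=1..M. exp (zfun sigma2 beta N h (lam m) \<omega>)))
         \<le> (\<Sum>m=1..M. min 2 (cmod (1 - zfun sigma2 beta N h (lam m) \<omega>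
                                      - exp (- zfun sigma2 beta N h (lam m) \<omega>))))"
proof -
  let ?z = "\<lambda>m. zfun sigma2 beta N h (lam m) \<omega>"
  have re: "Re (?z m) \<le> 0" if "m \<in> {1..M}" for m
    using re_z assms that by (meson less_imp_le)
  have "cmod ((\<Prod>m=1..M. 1 / (1 - ?z m)) - (\<Prod>m=1..M. exp (?z m)))
     \<le> (\<Sum>m=1..M. norm (1 / (1 - ?z m) - exp (?z m)))"
  proof (rule prod_diff)
    fix m assume m: "m \<in> {1..M}"
    have "norm (1 - ?z m) \<ge> 1"
      using complex_Re_le_cmod[of "1-?z m"] re[OF m] by simp
    thus "norm (1 / (1 - ?z m)) \<le> 1" by (simp add: norm_divide divide_le_eq_1)
    show "norm (exp (?z m)) \<le> 1" using re[OF m] by simp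
  qed simp
  also have "\<dots> \<le> (\<Sum>m=1..M. min 2 (cmod (1 - ?z m - exp (- ?z m))))"
    by (intro sum_mono single re)
  finally show ?thesis .
qed

end
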